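(* Let $\mathfrak g$ be one of the complex simple Lie algebras $\mathfrak{sl}_3$, $\mathfrak{sp}_2$, or $\mathfrak g_2$, with a choice of positive roots $\Sigma^+$. Then, as a rational function, $$\sum_{\substack{\beta,\gamma\in\Sigma^+\\ \beta\neq\gamma}}\frac{\langle\beta,\gamma\rangle}{\beta\,\gamma}=0.$$
   Context: Roots are regarded as linear functions (on the real Cartan subspace, equivalently on its dual via the inner product), so $\frac{\langle\beta,\gamma\rangle}{\beta\gamma}$ is a rational function whose numerator is the constant $\langle\beta,\gamma\rangle$, the inner product on roots induced by the Killing form. *)

theory Defs
  imports "HOL-Analysis.Analysis"
begin

text \<open>Real Cartan subspace of a rank-2 simple Lie algebra, identified with its dual
  via the (Killing-induced) inner product: the Euclidean plane real^2.
  A root beta acts as the linear function x |-> beta \<bullet> x.\<close>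

definition vec2 :: "real \<Rightarrow> real \<Rightarrow> real^2" where
  "vec2 a b = (\<chi> i. if i = 1 then a else b)"

definition sym_set :: "(real^2) set \<Rightarrow> (real^2) set" where
  "sym_set S = S \<union> uminus ` S"

definition rootsA2 :: "(real^2) set" where
  "rootsA2 = sym_set {vec2 1 0, vec2 (1/2) (sqrt 3 / 2), vec2 (-1/2) (sqrt 3 / 2)}"

definition rootsC2 :: "(real^2) set" where
  "rootsC2 = sym_set {vec2 2 0, vec2 0 2, vec2 1 1, vec2 1 (-1)}"

definition rootsG2 :: "(real^2) set" where
  "rootsG2 = sym_set {vec2 1 0, vec2 (1/2) (sqrt 3 / 2), vec2 (-1/2) (sqrt 3 / 2),
                      vec2 0 (sqrt 3), vec2 (3/2) (sqrt 3 / 2), vec2 (3/2) (- sqrt 3 / 2)}"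

definition is_positive_system :: "(real^2) set \<Rightarrow> (real^2) set \<Rightarrow> bool" where
  "is_positive_system R P \<longleftrightarrow>
     (\<exists>v. (\<forall>\<alpha>\<in>R. \<alpha> \<bullet> v \<noteq> 0) \<and> P = {\<alpha>\<in>R. \<alpha> \<bullet> v > 0})"

end

theory Submission imports Defs begin
lemma vec2_nth1[simp]: "vec2 a b $ 1 = a" by (simp add: vec2_def)
lemma vec2_nth2[simp]: "vec2 a b $ 2 = b" by (simp add: vec2_def)
lemma vec2_inner: "vec2 a b \<bullet> y = a * y$1 + b * y$2"
  by (simp add: inner_vec_def UNIV_2)
lemma vec2_eq: "vec2 a b = vec2 c d \<longleftrightarrow> a = c \<and> b = d"
  by (metis vec2_nth1 vec2_nth2 vec_eq_iff exhaust_2)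

lemma sumpairs: fixes f :: "'a \<Rightarrow> 'a \<Rightarrow> real"
  assumes "distinct xs"
  shows "(\<Sum>(\<beta>, \<gamma>)\<in>{(\<beta>, \<gamma>). \<beta> \<in> set xs \<and> \<gamma> \<in> set xs \<and> \<beta> \<noteq> \<gamma>}. f \<beta> \<gamma>)
  = sum_list (map (\<lambda>b. sum_list (map (f b) xs)) xs) - sum_list (map (\<lambda>b. f b b) xs)"
proof -
  have "{(\<beta>, \<gamma>). \<beta> \<in> set xs \<and> \<gamma> \<in> set xs \<and> \<beta> \<noteq> \<gamma>} = Sigma (set xs) (\<lambda>\<beta>. set xs - {\<beta>})" by auto
  then have "(\<Sum>(\<beta>, \<gamma>)\<in>{(\<beta>, \<gamma>). \<beta> \<in> set xs \<and> \<gamma> \<in> set xs \<and> \<beta> \<noteq> \<gamma>}. f \<beta> \<gamma>)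
     = (\<Sum>\<beta>\<in>set xs. \<Sum>\<gamma>\<in>set xs - {\<beta>}. f \<beta> \<gamma>)" by (simp add: sum.Sigma)
  also have "\<dots> = (\<Sum>\<beta>\<in>set xs. (\<Sum>\<gamma>\<in>set xs. f \<beta> \<gamma>) - f \<beta> \<beta>)"
    by (intro sum.cong refl) (simp add: sum_diff1)
  also have "\<dots> = (\<Sum>\<beta>\<in>set xs. (\<Sum>\<gamma>\<in>set xs. f \<beta> \<gamma>)) - (\<Sum>\<beta>\<in>set xs. f \<beta> \<beta>)"
    by (simp add: sum_subtractf)
  finally show ?thesis using assms by (simp add: sum_list_distinct_conv_sum_set)
qed

lemma vec2_neg: "- vec2 a b = vec2 (-a) (-b)"
  by (simp add: vec_eq_iff vec2_def)

lemma s3: "sqrt 3 * sqrt 3 = (3::real)" by simp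

lemma divprod: "(c::real)/(A*B) = c * inverse A * inverse B" by (simp add: divide_inverse)

definition "lA2 = [vec2 1 0, vec2 (1/2) (sqrt 3 / 2), vec2 (-1/2) (sqrt 3 / 2)]"
lemma A2id:
  assumes "\<forall>a\<in>set lA2. a \<bullet> x \<noteq> 0"
  shows "(\<Sum>(\<beta>, \<gamma>)\<in>{(\<beta>, \<gamma>). \<beta> \<in> set lA2 \<and> \<gamma> \<in> set lA2 \<and> \<beta> \<noteq> \<gamma>}.
            (\<beta> \<bullet> \<gamma>) / ((\<beta> \<bullet> x) * (\<gamma> \<bullet> x))) = 0"
proof -
  have dist: "distinct lA2" unfolding lA2_def by (simp add: vec2_eq)
  define u1 where "u1 = (vec2 1 0 :: real^2)"
  define u2 where "u2 = (vec2 (1/2) (sqrt 3 / 2) :: real^2)"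
  define u3 where "u3 = (vec2 (-1/2) (sqrt 3 / 2) :: real^2)"
  have L: "lA2 = [u1,u2,u3]" unfolding lA2_def u1_def u2_def u3_def by simp
  have nz: "u1 \<bullet> x \<noteq> 0" "u2 \<bullet> x \<noteq> 0" "u3 \<bullet> x \<noteq> 0" using assms[unfolded L] by auto
  obtain i1 i2 i3 where h: "(u1 \<bullet> x) * i1 = 1" "(u2 \<bullet> x) * i2 = 1" "(u3 \<bullet> x) * i3 = 1"
    using nz by (metis right_inverse)
  have e: "inverse (u1 \<bullet> x) = i1" "inverse (u2 \<bullet> x) = i2" "inverse (u3 \<bullet> x) = i3"
    using h by (simp_all add: inverse_unique)
  have "(\<Sum>(\<beta>, \<gamma>)\<in>{(\<beta>, \<gamma>). \<beta> \<in> set lA2 \<and> \<gamma> \<in> set lA2 \<and> \<beta> \<noteq> \<gamma>}.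
            (\<beta> \<bullet> \<gamma>) / ((\<beta> \<bullet> x) * (\<gamma> \<bullet> x)))
     = (u1\<bullet>u1)*i1*i1 + (u1\<bullet>u2)*i1*i2 + (u1\<bullet>u3)*i1*i3 + (u2\<bullet>u1)*i2*i1 + (u2\<bullet>u2)*i2*i2 + (u2\<bullet>u3)*i2*i3 + (u3\<bullet>u1)*i3*i1 + (u3\<bullet>u2)*i3*i2 + (u3\<bullet>u3)*i3*i3 - ((u1\<bullet>u1)*i1*i1 + (u2\<bullet>u2)*i2*i2 + (u3\<bullet>u3)*i3*i3)"
    apply (subst sumpairs[OF dist])
    unfolding L by (simp add: divprod e add.assoc)
  also have "\<dots> = 0"
    using h s3 unfolding u1_def u2_def u3_def vec2_inner vec2_nth1 vec2_nth2
    by (simp add: field_simps) algebra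
  finally show ?thesis .
qed

lemma A2opp: "\<forall>a\<in>set lA2. \<forall>b\<in>set lA2. a \<noteq> -b"
  unfolding lA2_def by (simp add: vec2_neg vec2_eq)


definition "lC2 = [vec2 2 0, vec2 0 2, vec2 1 1, vec2 1 (-1)]"
lemma C2id:
  assumes "\<forall>a\<in>set lC2. a \<bullet> x \<noteq> 0"
  shows "(\<Sum>(\<beta>, \<gamma>)\<in>{(\<beta>, \<gamma>). \<beta> \<in> set lC2 \<and> \<gamma> \<in> set lC2 \<and> \<beta> \<noteq> \<gamma>}.
            (\<beta> \<bullet> \<gamma>) / ((\<beta> \<bullet> x) * (\<gamma> \<bullet> x))) = 0"
proof -
  have dist: "distinct lC2" unfolding lC2_def by (simp add: vec2_eq)
  define u1 where "u1 = (vec2 2 0 :: real^2)"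
  define u2 where "u2 = (vec2 0 2 :: real^2)"
  define u3 where "u3 = (vec2 1 1 :: real^2)"
  define u4 where "u4 = (vec2 1 (-1) :: real^2)"
  have L: "lC2 = [u1,u2,u3,u4]" unfolding lC2_def u1_def u2_def u3_def u4_def by simp
  have nz: "u1 \<bullet> x \<noteq> 0" "u2 \<bullet> x \<noteq> 0" "u3 \<bullet> x \<noteq> 0" "u4 \<bullet> x \<noteq> 0" using assms[unfolded L] by auto
  obtain i1 i2 i3 i4 where h: "(u1 \<bullet> x) * i1 = 1" "(u2 \<bullet> x) * i2 = 1" "(u3 \<bullet> x) * i3 = 1" "(u4 \<bullet> x) * i4 = 1"
    using nz by (metis right_inverse)
  have e: "inverse (u1 \<bullet> x) = i1" "inverse (u2 \<bullet> x) = i2" "inverse (u3 \<bullet> x) = i3" "inverse (u4 \<bullet> x) = i4"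
    using h by (simp_all add: inverse_unique)
  have "(\<Sum>(\<beta>, \<gamma>)\<in>{(\<beta>, \<gamma>). \<beta> \<in> set lC2 \<and> \<gamma> \<in> set lC2 \<and> \<beta> \<noteq> \<gamma>}.
            (\<beta> \<bullet> \<gamma>) / ((\<beta> \<bullet> x) * (\<gamma> \<bullet> x)))
     = (u1\<bullet>u1)*i1*i1 + (u1\<bullet>u2)*i1*i2 + (u1\<bullet>u3)*i1*i3 + (u1\<bullet>u4)*i1*i4 + (u2\<bullet>u1)*i2*i1 + (u2\<bullet>u2)*i2*i2 + (u2\<bullet>u3)*i2*i3 + (u2\<bullet>u4)*i2*i4 + (u3\<bullet>u1)*i3*i1 + (u3\<bullet>u2)*i3*i2 + (u3\<bullet>u3)*i3*i3 + (u3\<bullet>u4)*i3*i4 + (u4\<bullet>u1)*i4*i1 + (u4\<bullet>u2)*i4*i2 + (u4\<bullet>u3)*i4*i3 + (u4\<bullet>u4)*i4*i4 - ((u1\<bullet>u1)*i1*i1 + (u2\<bullet>u2)*i2*i2 + (u3\<bullet>u3)*i3*i3 + (u4\<bullet>u4)*i4*i4)"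
    apply (subst sumpairs[OF dist])
    unfolding L by (simp add: divprod e add.assoc)
  also have "\<dots> = 0"
    using h s3 unfolding u1_def u2_def u3_def u4_def vec2_inner vec2_nth1 vec2_nth2
    by (simp add: field_simps) algebra
  finally show ?thesis .
qed

lemma C2opp: "\<forall>a\<in>set lC2. \<forall>b\<in>set lC2. a \<noteq> -b"
  unfolding lC2_def by (simp add: vec2_neg vec2_eq)


definition "lG2 = [vec2 1 0, vec2 (1/2) (sqrt 3 / 2), vec2 (-1/2) (sqrt 3 / 2), vec2 0 (sqrt 3), vec2 (3/2) (sqrt 3 / 2), vec2 (3/2) (- sqrt 3 / 2)]"
lemma G2id:
  assumes "\<forall>a\<in>set lG2. a \<bullet> x \<noteq> 0"
  shows "(\<Sum>(\<beta>, \<gamma>)\<in>{(\<beta>, \<gamma>). \<beta> \<in> set lG2 \<and> \<gamma> \<in> set lG2 \<and> \<beta> \<noteq> \<gamma>}.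
            (\<beta> \<bullet> \<gamma>) / ((\<beta> \<bullet> x) * (\<gamma> \<bullet> x))) = 0"
proof -
  have dist: "distinct lG2" unfolding lG2_def by (simp add: vec2_eq)
  define u1 where "u1 = (vec2 1 0 :: real^2)"
  define u2 where "u2 = (vec2 (1/2) (sqrt 3 / 2) :: real^2)"
  define u3 where "u3 = (vec2 (-1/2) (sqrt 3 / 2) :: real^2)"
  define u4 where "u4 = (vec2 0 (sqrt 3) :: real^2)"
  define u5 where "u5 = (vec2 (3/2) (sqrt 3 / 2) :: real^2)"
  define u6 where "u6 = (vec2 (3/2) (- sqrt 3 / 2) :: real^2)"
  have L: "lG2 = [u1,u2,u3,u4,u5,u6]" unfolding lG2_def u1_def u2_def u3_def u4_def u5_def u6_def by simp
  have nz: "u1 \<bullet> x \<noteq> 0" "u2 \<bullet> x \<noteq> 0" "u3 \<bullet> x \<noteq> 0" "u4 \<bullet> x \<noteq> 0" "u5 \<bullet> x \<noteq> 0" "u6 \<bullet> x \<noteq> 0" using assms[unfolded L] by auto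
  obtain i1 i2 i3 i4 i5 i6 where h: "(u1 \<bullet> x) * i1 = 1" "(u2 \<bullet> x) * i2 = 1" "(u3 \<bullet> x) * i3 = 1" "(u4 \<bullet> x) * i4 = 1" "(u5 \<bullet> x) * i5 = 1" "(u6 \<bullet> x) * i6 = 1"
    using nz by (metis right_inverse)
  have e: "inverse (u1 \<bullet> x) = i1" "inverse (u2 \<bullet> x) = i2" "inverse (u3 \<bullet> x) = i3" "inverse (u4 \<bullet> x) = i4" "inverse (u5 \<bullet> x) = i5" "inverse (u6 \<bullet> x) = i6"
    using h by (simp_all add: inverse_unique)
  have "(\<Sum>(\<beta>, \<gamma>)\<in>{(\<beta>, \<gamma>). \<beta> \<in> set lG2 \<and> \<gamma> \<in> set lG2 \<and> \<beta> \<noteq> \<gamma>}.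
            (\<beta> \<bullet> \<gamma>) / ((\<beta> \<bullet> x) * (\<gamma> \<bullet> x)))
     = (u1\<bullet>u1)*i1*i1 + (u1\<bullet>u2)*i1*i2 + (u1\<bullet>u3)*i1*i3 + (u1\<bullet>u4)*i1*i4 + (u1\<bullet>u5)*i1*i5 + (u1\<bullet>u6)*i1*i6 + (u2\<bullet>u1)*i2*i1 + (u2\<bullet>u2)*i2*i2 + (u2\<bullet>u3)*i2*i3 + (u2\<bullet>u4)*i2*i4 + (u2\<bullet>u5)*i2*i5 + (u2\<bullet>u6)*i2*i6 + (u3\<bullet>u1)*i3*i1 + (u3\<bullet>u2)*i3*i2 + (u3\<bullet>u3)*i3*i3 + (u3\<bullet>u4)*i3*i4 + (u3\<bullet>u5)*i3*i5 + (u3\<bullet>u6)*i3*i6 + (u4\<bullet>u1)*i4*i1 + (u4\<bullet>u2)*i4*i2 + (u4\<bullet>u3)*i4*i3 + (u4\<bullet>u4)*i4*i4 + (u4\<bullet>u5)*i4*i5 + (u4\<bullet>u6)*i4*i6 + (u5\<bullet>u1)*i5*i1 + (u5\<bullet>u2)*i5*i2 + (u5\<bullet>u3)*i5*i3 + (u5\<bullet>u4)*i5*i4 + (u5\<bullet>u5)*i5*i5 + (u5\<bullet>u6)*i5*i6 + (u6\<bullet>u1)*i6*i1 + (u6\<bullet>u2)*i6*i2 + (u6\<bullet>u3)*i6*i3 + (u6\<bullet>u4)*i6*i4 + (u6\<bullet>u5)*i6*i5 + (u6\<bullet>u6)*i6*i6 - ((u1\<bullet>u1)*i1*i1 + (u2\<bullet>u2)*i2*i2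 + (u3\<bullet>u3)*i3*i3 + (u4\<bullet>u4)*i4*i4 + (u5\<bullet>u5)*i5*i5 + (u6\<bullet>u6)*i6*i6)"
    apply (subst sumpairs[OF dist])
    unfolding L by (simp add: divprod e add.assoc)
  also have "\<dots> = 0"
    using h s3 unfolding u1_def u2_def u3_def u4_def u5_def u6_def vec2_inner vec2_nth1 vec2_nth2
    by (simp add: field_simps) algebra
  finally show ?thesis .
qed

lemma G2opp: "\<forall>a\<in>set lG2. \<forall>b\<in>set lG2. a \<noteq> -b"
  unfolding lG2_def by (simp add: vec2_neg vec2_eq)


lemma transfer:
  fixes S P :: "(real^2) set" and v x :: "real^2"
  assumes opp: "\<forall>a\<in>S. \<forall>b\<in>S. a \<noteq> -b" and nz: "\<forall>a\<in>S. a \<bullet> v \<noteq> 0"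
    and P: "P = {\<alpha> \<in> S \<union> uminus ` S. \<alpha> \<bullet> v > 0}"
    and xP: "\<forall>\<beta>\<in>P. \<beta> \<bullet> x \<noteq> 0"
  shows "(\<forall>a\<in>S. a \<bullet> x \<noteq> 0) \<and>
    (\<Sum>(\<beta>, \<gamma>)\<in>{(\<beta>, \<gamma>). \<beta> \<in> P \<and> \<gamma> \<in> P \<and> \<beta> \<noteq> \<gamma>}.
            (\<beta> \<bullet> \<gamma>) / ((\<beta> \<bullet> x) * (\<gamma> \<bullet> x))) =
    (\<Sum>(\<beta>, \<gamma>)\<in>{(\<beta>, \<gamma>). \<beta> \<in> S \<and> \<gamma> \<in> S \<and> \<beta> \<noteq> \<gamma>}.
            (\<beta> \<bullet> \<gamma>) / ((\<beta> \<bullet> x) * (\<gamma> \<bullet> x)))"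
proof -
  define g where "g a = (if a \<bullet> v > 0 then a else -a)" for a :: "real^2"
  have inj: "inj_on g S"
  proof
    fix a b assume "a \<in> S" "b \<in> S" "g a = g b"
    moreover have "a \<noteq> -b" "b \<noteq> -a" using opp \<open>a \<in> S\<close> \<open>b \<in> S\<close> by auto
    ultimately show "a = b" unfolding g_def by (cases "a \<bullet> v > 0"; cases "b \<bullet> v > 0"; simp; metis minus_minus)
  qed
  have img: "g ` S = P"
  proof
    show "g ` S \<subseteq> P" using nz unfolding P g_def by auto
    show "P \<subseteq> g ` S"
    proof
      fix \<alpha> assume "\<alpha> \<in> P"
      then have "\<alpha> \<in> S \<or> (\<exists>a\<in>S. \<alpha> = -a)" "\<alpha> \<bullet> v > 0" unfolding P by auto
      then show "\<alpha> \<in> g ` S"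
      proof (elim disjE bexE)
        assume "\<alpha> \<in> S" "\<alpha> \<bullet> v > 0" then show ?thesis unfolding g_def by force
      next
        fix a assume "a \<in> S" "\<alpha> = -a" "\<alpha> \<bullet> v > 0"
        then have "g a = \<alpha>" unfolding g_def by auto
        then show ?thesis using \<open>a \<in> S\<close> by blast
      qed
    qed
  qed
  have gx: "g a \<bullet> x = a \<bullet> x \<or> g a \<bullet> x = - (a \<bullet> x)" for a unfolding g_def by auto
  have xS: "\<forall>a\<in>S. a \<bullet> x \<noteq> 0"
  proof
    fix a assume "a \<in> S" then have "g a \<in> P" using img by blast
    then show "a \<bullet> x \<noteq> 0" using xP gx[of a] by auto
  qed
  define h where "h p = (g (fst p), g (snd p))" for p :: "(real^2) \<times> (real^2)"
  have bij: "bij_betw h {(\<beta>, \<gamma>). \<beta> \<in> S \<and> \<gamma> \<in> S \<and> \<beta> \<noteq> \<gamma>} {(\<beta>, \<gamma>). \<beta> \<in> P \<and> \<gamma> \<in> P \<and> \<beta> \<noteq> \<gamma>}"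
    unfolding bij_betw_def
  proof
    show "inj_on h {(\<beta>, \<gamma>). \<beta> \<in> S \<and> \<gamma> \<in> S \<and> \<beta> \<noteq> \<gamma>}"
      using inj unfolding inj_on_def h_def by auto
    show "h ` {(\<beta>, \<gamma>). \<beta> \<in> S \<and> \<gamma> \<in> S \<and> \<beta> \<noteq> \<gamma>} = {(\<beta>, \<gamma>). \<beta> \<in> P \<and> \<gamma> \<in> P \<and> \<beta> \<noteq> \<gamma>}"
    proof
      show "h ` {(\<beta>, \<gamma>). \<beta> \<in> S \<and> \<gamma> \<in> S \<and> \<beta> \<noteq> \<gamma>} \<subseteq> {(\<beta>, \<gamma>). \<beta> \<in> P \<and> \<gamma> \<in> P \<and> \<beta> \<noteq> \<gamma>}"
        using inj img unfolding inj_on_def h_def by auto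
      show "{(\<beta>, \<gamma>). \<beta> \<in> P \<and> \<gamma> \<in> P \<and> \<beta> \<noteq> \<gamma>} \<subseteq> h ` {(\<beta>, \<gamma>). \<beta> \<in> S \<and> \<gamma> \<in> S \<and> \<beta> \<noteq> \<gamma>}"
      proof clarify
        fix b c assume "b \<in> P" "c \<in> P" "b \<noteq> c"
        then obtain b' c' where "b' \<in> S" "c' \<in> S" "b = g b'" "c = g c'" using img by blast
        then show "(b, c) \<in> h ` {(\<beta>, \<gamma>). \<beta> \<in> S \<and> \<gamma> \<in> S \<and> \<beta> \<noteq> \<gamma>}"
          using \<open>b \<noteq> c\<close> unfolding h_def by (intro image_eqI[of _ _ "(b', c')"]) auto
      qed
    qed
  qed
  have tg: "(g a \<bullet> g b) / ((g a \<bullet> x) * (g b \<bullet> x)) = (a \<bullet> b) / ((a \<bullet> x) * (b \<bullet> x))" for a b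
    unfolding g_def by (cases "a \<bullet> v > 0"; cases "b \<bullet> v > 0") (simp_all add: inner_minus_left inner_minus_right)
  show ?thesis
    using xS sum.reindex_bij_betw[OF bij, of "\<lambda>(\<beta>, \<gamma>). (\<beta> \<bullet> \<gamma>) / ((\<beta> \<bullet> x) * (\<gamma> \<bullet> x))"]
    by (simp add: h_def tg case_prod_beta)
qed
theorem mainTheorem16:
  fixes R P :: "(real^2) set" and x :: "real^2"
  assumes "R \<in> {rootsA2, rootsC2, rootsG2}"
    and "is_positive_system R P"
    and "\<forall>\<beta>\<in>P. \<beta> \<bullet> x \<noteq> 0"
  shows "(\<Sum>(\<beta>, \<gamma>)\<in>{(\<beta>, \<gamma>). \<beta> \<in> P \<and> \<gamma> \<in> P \<and> \<beta> \<noteq> \<gamma>}.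
            (\<beta> \<bullet> \<gamma>) / ((\<beta> \<bullet> x) * (\<gamma> \<bullet> x))) = 0"
proof -
  obtain v where v: "\<forall>\<alpha>\<in>R. \<alpha> \<bullet> v \<noteq> 0" "P = {\<alpha>\<in>R. \<alpha> \<bullet> v > 0}"
    using assms(2) unfolding is_positive_system_def by blast
  have key: "(\<Sum>(\<beta>, \<gamma>)\<in>{(\<beta>, \<gamma>). \<beta> \<in> P \<and> \<gamma> \<in> P \<and> \<beta> \<noteq> \<gamma>}.
            (\<beta> \<bullet> \<gamma>) / ((\<beta> \<bullet> x) * (\<gamma> \<bullet> x))) = 0"
    if R: "R = sym_set S" and opp: "\<forall>a\<in>S. \<forall>b\<in>S. a \<noteq> -b"
      and id: "(\<forall>a\<in>S. a \<bullet> x \<noteq> 0) \<Longrightarrow> (\<Sum>(\<beta>, \<gamma>)\<in>{(\<beta>, \<gamma>). \<beta> \<in> S \<and> \<gamma> \<in> S \<and> \<beta> \<noteq> \<gamma>}.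
            (\<beta> \<bullet> \<gamma>) / ((\<beta> \<bullet> x) * (\<gamma> \<bullet> x))) = 0"
    for S
  proof -
    have nz: "\<forall>a\<in>S. a \<bullet> v \<noteq> 0" using v(1) unfolding R sym_set_def by blast
    have P: "P = {\<alpha> \<in> S \<union> uminus ` S. \<alpha> \<bullet> v > 0}" using v(2) unfolding R sym_set_def by simp
    from transfer[OF opp nz P assms(3)] id show ?thesis by simp
  qed
  have A: "rootsA2 = sym_set (set lA2)" unfolding rootsA2_def lA2_def by simp
  have C: "rootsC2 = sym_set (set lC2)" unfolding rootsC2_def lC2_def by simp
  have G: "rootsG2 = sym_set (set lG2)" unfolding rootsG2_def lG2_def by simp
  from assms(1) consider "R = rootsA2" | "R = rootsC2" | "R = rootsG2" by blast
  then show ?thesis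
  proof cases
    case 1 show ?thesis by (rule key[OF 1[unfolded A] A2opp A2id])
  next
    case 2 show ?thesis by (rule key[OF 2[unfolded C] C2opp C2id])
  next
    case 3 show ?thesis by (rule key[OF 3[unfolded G] G2opp G2id])
  qed
qed

thm_deps mainTheorem16

end
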